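(* Let $S$ be an inductive left $E$-monoid. Then $E$ is a maximal right pre-reduced subset of $E(S)$ if and only if $Rest(E,S)$ has precisely enough large idempotents. If moreover $S$ is integral with zero and $0\in E$, then $E$ is maximal right pre-reduced if and only if $Rest_0(E,S)$ has precisely enough large idempotents.
   Context: For a semigroup $S$, $E(S)$ is its set of idempotents; for $e,f\in E(S)$, $e\le_r f$ iff $e=ef$, and $e\sim_r f$ iff $e\le_r f$ and $f\le_r e$. $E\subseteq E(S)$ is right pre-reduced if $e=ef$ and $f=fe$ imply $e=f$ for $e,f\in E$; it is maximal right pre-reduced if it contains exactly one element of each $\sim_r$-class of $E(S)$. A monoid with zero is integral if $st=0$ implies $s=0$ or $t=0$. Let $S$ be a monoid and $1\in E\subseteq E(S)$. $S$ is an inductive left $E$-monoid if $E$ is right pre-reduced, $(E,\le_r)$ is a meet-semilattice with meet $\wedge$, and (I1') for all $t\in S$, $e\in E$ there is $t\cdot e\in E$ such that for all $s\in S$: $ste=st$ iff $s(t\cdot e)=s$; (I2') for $s\in S$, $e,f\in E$: $se=sf=s$ implies $s(e\wedge f)=s$. $Rest(E,S)$ is $C_E(S)=\{(e,s)\in E\times S\mid es=s\}$ with $(e,s)(f,t)=(e\wedge(s\cdot f),(e\wedge(s\cdot f))st)$ and $D((e,s))=(e,e)$; if $S$ is integral with zero and $0\in E$, $Rest_0(E,S)$ is the subset $C^0_E(S)=\{(e,s)\in C_E(S)\mid s=0\Rightarrow e=0\}$ with the same operations. A left restriction semigroup is a semigroup with unary $D$ satisfying $D(x)x=x$, $D(x)D(y)=D(y)D(x)$,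 $D(D(x)y)=D(x)D(y)$, $xD(y)=D(xy)x$. For a left restriction monoid $M$, $M_1=\{s\in M\mid D(s)=1\}$; a zero of $M$ is a semigroup zero $0$ with $D(0)=0$. $M$ has enough large idempotents if for every $e\in D(M)$ other than a zero of $M$ there is $f\in E(M_1)$ with $e\sim_r f$; it has precisely enough large idempotents if in addition for every $f\in E(M_1)$ there is $e\in D(M)$ with $e\sim_r f$. *)

theory Defs
  imports Main
begin

definition idems :: "'a::monoid_mult set" where
  "idems = {x. x * x = x}"

definition le_r :: "'a::monoid_mult \<Rightarrow> 'a \<Rightarrow> bool" where
  "le_r e f \<longleftrightarrow> e = e * f"

definition sim_r :: "'a::monoid_mult \<Rightarrow> 'a \<Rightarrow> bool" where
  "sim_r e f \<longleftrightarrow> le_r e f \<and> le_r f e"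

definition right_pre_reduced :: "'a::monoid_mult set \<Rightarrow> bool" where
  "right_pre_reduced E \<longleftrightarrow> E \<subseteq> idems \<and>
     (\<forall>e\<in>E. \<forall>f\<in>E. e = e * f \<and> f = f * e \<longrightarrow> e = f)"

definition max_right_pre_reduced :: "'a::monoid_mult set \<Rightarrow> bool" where
  "max_right_pre_reduced E \<longleftrightarrow> E \<subseteq> idems \<and>
     (\<forall>e\<in>idems. \<exists>!f. f \<in> E \<and> sim_r e f)"

text \<open>meet is the meet of (E, le_r); dot t e is the element t . e of (I1').\<close>
definition inductive_left_E_monoid ::
  "'a::monoid_mult set \<Rightarrow> ('a \<Rightarrow> 'a \<Rightarrow> 'a) \<Rightarrow> ('a \<Rightarrow> 'a \<Rightarrow> 'a) \<Rightarrow> bool" where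
  "inductive_left_E_monoid E meet dot \<longleftrightarrow>
     1 \<in> E \<and> E \<subseteq> idems \<and> right_pre_reduced E \<and>
     (\<forall>e\<in>E. \<forall>f\<in>E. meet e f \<in> E \<and> le_r (meet e f) e \<and> le_r (meet e f) f \<and>
        (\<forall>g\<in>E. le_r g e \<and> le_r g f \<longrightarrow> le_r g (meet e f))) \<and>
     (\<forall>t. \<forall>e\<in>E. dot t e \<in> E \<and> (\<forall>s. s * t * e = s * t \<longleftrightarrow> s * dot t e = s)) \<and>
     (\<forall>s. \<forall>e\<in>E. \<forall>f\<in>E. s * e = s \<and> s * f = s \<longrightarrow> s * meet e f = s)"

definition rest_carrier :: "'a::monoid_mult set \<Rightarrow> ('a \<times> 'a) set" where
  "rest_carrier E = {(e, s). e \<in> E \<and> e * s = s}"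

definition rest_carrier0 :: "'a::monoid_mult set \<Rightarrow> 'a \<Rightarrow> ('a \<times> 'a) set" where
  "rest_carrier0 E z = {(e, s). (e, s) \<in> rest_carrier E \<and> (s = z \<longrightarrow> e = z)}"

definition rest_mult ::
  "('a::monoid_mult \<Rightarrow> 'a \<Rightarrow> 'a) \<Rightarrow> ('a \<Rightarrow> 'a \<Rightarrow> 'a) \<Rightarrow> 'a \<times> 'a \<Rightarrow> 'a \<times> 'a \<Rightarrow> 'a \<times> 'a" where
  "rest_mult meet dot x y =
     (let g = meet (fst x) (dot (snd x) (fst y)) in (g, g * snd x * snd y))"

definition rest_D :: "'a \<times> 'a \<Rightarrow> 'a \<times> 'a" where
  "rest_D x = (fst x, fst x)"

definition is_zero_of :: "'a::monoid_mult \<Rightarrow> bool" where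
  "is_zero_of z \<longleftrightarrow> (\<forall>x. z * x = z \<and> x * z = z)"

definition integral_with_zero :: "'a::monoid_mult \<Rightarrow> bool" where
  "integral_with_zero z \<longleftrightarrow> is_zero_of z \<and> (\<forall>s t. s * t = z \<longrightarrow> s = z \<or> t = z)"

definition lr_zero :: "'b set \<Rightarrow> ('b \<Rightarrow> 'b \<Rightarrow> 'b) \<Rightarrow> ('b \<Rightarrow> 'b) \<Rightarrow> 'b \<Rightarrow> bool" where
  "lr_zero M mult D z \<longleftrightarrow> z \<in> M \<and> (\<forall>x\<in>M. mult z x = z \<and> mult x z = z) \<and> D z = z"

definition sim_r_in :: "('b \<Rightarrow> 'b \<Rightarrow> 'b) \<Rightarrow> 'b \<Rightarrow> 'b \<Rightarrow> bool" where
  "sim_r_in mult e f \<longleftrightarrow> e = mult e f \<and> f = mult f e"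

definition large_idems :: "'b set \<Rightarrow> ('b \<Rightarrow> 'b \<Rightarrow> 'b) \<Rightarrow> ('b \<Rightarrow> 'b) \<Rightarrow> 'b \<Rightarrow> 'b set" where
  "large_idems M mult D one = {s \<in> M. D s = one \<and> mult s s = s}"

definition enough_large_idems ::
  "'b set \<Rightarrow> ('b \<Rightarrow> 'b \<Rightarrow> 'b) \<Rightarrow> ('b \<Rightarrow> 'b) \<Rightarrow> 'b \<Rightarrow> bool" where
  "enough_large_idems M mult D one \<longleftrightarrow>
     (\<forall>e\<in>D ` M. \<not> lr_zero M mult D e \<longrightarrow>
        (\<exists>f\<in>large_idems M mult D one. sim_r_in mult e f))"

definition precisely_enough_large_idems ::
  "'b set \<Rightarrow> ('b \<Rightarrow> 'b \<Rightarrow> 'b) \<Rightarrow> ('b \<Rightarrow> 'b) \<Rightarrow> 'b \<Rightarrow> bool" where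
  "precisely_enough_large_idems M mult D one \<longleftrightarrow>
     enough_large_idems M mult D one \<and>
     (\<forall>f\<in>large_idems M mult D one. \<exists>e\<in>D ` M. sim_r_in mult e f)"

end

theory Submission
  imports Defs
begin

lemma ilm_E: "inductive_left_E_monoid E meet dot \<Longrightarrow> 1 \<in> E \<and> E \<subseteq> idems"
  by (simp add: inductive_left_E_monoid_def)

lemma ilm_parts1:
  assumes "inductive_left_E_monoid E meet dot"
  shows "right_pre_reduced E"
  using assms unfolding inductive_left_E_monoid_def apply (elim conjE) apply assumption done

lemma ilm_parts2:
  assumes "inductive_left_E_monoid E meet dot"
  shows "\<forall>e\<in>E. \<forall>f\<in>E. meet e f \<in> E \<and> le_r (meet e f) e \<and> le_r (meet e f) f \<and>
        (\<forall>g\<in>E. le_r g e \<and> le_r g f \<longrightarrow> le_r g (meet e f))"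
  using assms unfolding inductive_left_E_monoid_def apply (elim conjE) apply assumption done

lemma ilm_parts3:
  assumes "inductive_left_E_monoid E meet dot"
  shows "\<forall>t. \<forall>e\<in>E. dot t e \<in> E \<and> (\<forall>s. s * t * e = s * t \<longleftrightarrow> s * dot t e = s)"
  using assms unfolding inductive_left_E_monoid_def apply (elim conjE) apply assumption done

lemma ilm_rpr: "inductive_left_E_monoid E meet dot \<Longrightarrow> e \<in> E \<Longrightarrow> f \<in> E \<Longrightarrow> e = e * f \<Longrightarrow> f = f * e \<Longrightarrow> e = f"
proof -
  assume A: "inductive_left_E_monoid E meet dot" and h: "e \<in> E" "f \<in> E" "e = e * f" "f = f * e"
  have "\<forall>e\<in>E. \<forall>f\<in>E. e = e * f \<and> f = f * e \<longrightarrow> e = f"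
    using ilm_parts1[OF A] unfolding right_pre_reduced_def by (elim conjE)
  then show "e = f" using h by blast
qed

lemma ilm_meet: "inductive_left_E_monoid E meet dot \<Longrightarrow> e \<in> E \<Longrightarrow> f \<in> E \<Longrightarrow>
   meet e f \<in> E \<and> le_r (meet e f) e \<and> le_r (meet e f) f \<and>
        (\<forall>g\<in>E. le_r g e \<and> le_r g f \<longrightarrow> le_r g (meet e f))"
  using ilm_parts2 by blast

lemma ilm_dot: "inductive_left_E_monoid E meet dot \<Longrightarrow> e \<in> E \<Longrightarrow>
   dot t e \<in> E \<and> (\<forall>s. s * t * e = s * t \<longleftrightarrow> s * dot t e = s)"
  using ilm_parts3 by blast

lemma idem_of_E: "inductive_left_E_monoid E meet dot \<Longrightarrow> e \<in> E \<Longrightarrow> e * e = e"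
  using ilm_E unfolding idems_def by blast

lemma meet_1_left:
  assumes A: "inductive_left_E_monoid E meet dot" and x: "x \<in> E"
  shows "meet 1 x = x"
proof -
  have 1: "1 \<in> E" using ilm_E[OF A] by simp
  note m = ilm_meet[OF A 1 x]
  have xx: "x * x = x" using idem_of_E[OF A x] .
  have "le_r x (meet 1 x)" using m x xx by (simp add: le_r_def)
  moreover have "le_r (meet 1 x) x" using m by simp
  ultimately show ?thesis using ilm_rpr[OF A] m x unfolding le_r_def by metis
qed

lemma meet_1_right:
  assumes A: "inductive_left_E_monoid E meet dot" and x: "x \<in> E"
  shows "meet x 1 = x"
proof -
  have 1: "1 \<in> E" using ilm_E[OF A] by simp
  note m = ilm_meet[OF A x 1]
  have xx: "x * x = x" using idem_of_E[OF A x] .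
  have "le_r x (meet x 1)" using m x xx by (simp add: le_r_def)
  moreover have "le_r (meet x 1) x" using m by simp
  ultimately show ?thesis using ilm_rpr[OF A] m x unfolding le_r_def by metis
qed

lemma dot_1_iff:
  assumes A: "inductive_left_E_monoid E meet dot" and e: "e \<in> E"
  shows "dot t e = 1 \<longleftrightarrow> t * e = t"
proof
  assume "dot t e = 1"
  then show "t * e = t" using ilm_dot[OF A e, of t] by (metis mult_1 mult_1_right)
next
  assume h: "t * e = t"
  have "\<forall>s. s * t * e = s * t" using h by (simp add: mult.assoc)
  then have "1 * dot t e = 1" using ilm_dot[OF A e, of t] by blast
  then show "dot t e = 1" by simp
qed

lemma dot_1: "inductive_left_E_monoid E meet dot \<Longrightarrow> dot t 1 = 1"
  using dot_1_iff[of E meet dot 1 t] ilm_E by auto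

lemma mult_D: "inductive_left_E_monoid E meet dot \<Longrightarrow> rest_mult meet dot (1, s) (1, s) = (1, s * s)"
  by (simp add: rest_mult_def dot_1 meet_1_left ilm_E)

lemma sim_char:
  assumes A: "inductive_left_E_monoid E meet dot" and e: "e \<in> E"
  shows "sim_r_in (rest_mult meet dot) (e, e) (1, f) \<longleftrightarrow> sim_r e f"
proof -
  have 1: "1 \<in> E" using ilm_E[OF A] by simp
  have ee: "e * e = e" using idem_of_E[OF A e] .
  have p1: "rest_mult meet dot (e, e) (1, f) = (e, e * f)"
    using ee by (simp add: rest_mult_def dot_1[OF A] meet_1_right[OF A e] mult.assoc[symmetric])
  have de: "dot f e \<in> E" using ilm_dot[OF A e] by blast
  have p2: "rest_mult meet dot (1, f) (e, e) = (dot f e, dot f e * f * e)"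
    by (simp add: rest_mult_def Let_def meet_1_left[OF A de])
  show ?thesis
    unfolding sim_r_in_def p1 p2 sim_r_def le_r_def
    using dot_1_iff[OF A e, of f] by auto
qed

lemma D_img: "inductive_left_E_monoid E meet dot \<Longrightarrow> rest_D ` rest_carrier E = {(e, e) | e. e \<in> E}"
proof -
  assume A: "inductive_left_E_monoid E meet dot"
  show ?thesis
  proof
    show "rest_D ` rest_carrier E \<subseteq> {(e, e) | e. e \<in> E}"
      by (auto simp: rest_D_def rest_carrier_def)
    show "{(e, e) | e. e \<in> E} \<subseteq> rest_D ` rest_carrier E"
    proof
      fix p assume "p \<in> {(e, e) | e. e \<in> E}"
      then obtain e where e: "p = (e, e)" "e \<in> E" by blast
      have "(e, e) \<in> rest_carrier E" using e idem_of_E[OF A] by (simp add: rest_carrier_def)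
      moreover have "rest_D (e, e) = p" using e by (simp add: rest_D_def)
      ultimately show "p \<in> rest_D ` rest_carrier E" by (metis image_eqI)
    qed
  qed
qed

lemma D_img0: "inductive_left_E_monoid E meet dot \<Longrightarrow> rest_D ` rest_carrier0 E z = {(e, e) | e. e \<in> E}"
proof -
  assume A: "inductive_left_E_monoid E meet dot"
  show ?thesis
  proof
    show "rest_D ` rest_carrier0 E z \<subseteq> {(e, e) | e. e \<in> E}"
      by (auto simp: rest_D_def rest_carrier0_def rest_carrier_def)
    show "{(e, e) | e. e \<in> E} \<subseteq> rest_D ` rest_carrier0 E z"
    proof
      fix p assume "p \<in> {(e, e) | e. e \<in> E}"
      then obtain e where e: "p = (e, e)" "e \<in> E" by blast
      have "(e, e) \<in> rest_carrier0 E z" using e idem_of_E[OF A] by (simp add: rest_carrier0_def rest_carrier_def)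
      moreover have "rest_D (e, e) = p" using e by (simp add: rest_D_def)
      ultimately show "p \<in> rest_D ` rest_carrier0 E z" by (metis image_eqI)
    qed
  qed
qed

lemma LI: "inductive_left_E_monoid E meet dot \<Longrightarrow>
  large_idems (rest_carrier E) (rest_mult meet dot) rest_D (1,1) = {(1, f) | f. f \<in> idems}"
  unfolding large_idems_def rest_carrier_def rest_D_def
  by (auto simp: mult_D idems_def ilm_E)

lemma LI0: "inductive_left_E_monoid E meet dot \<Longrightarrow>
  large_idems (rest_carrier0 E z) (rest_mult meet dot) rest_D (1,1) = {(1, f) | f. f \<in> idems \<and> (f = z \<longrightarrow> 1 = z)}"
  unfolding large_idems_def rest_carrier0_def rest_carrier_def rest_D_def
  by (auto simp: mult_D idems_def ilm_E)

lemma sim_sym: "sim_r e f \<Longrightarrow> sim_r f e" by (simp add: sim_r_def)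
lemma sim_trans: "sim_r e f \<Longrightarrow> sim_r f g \<Longrightarrow> sim_r e g"
  unfolding sim_r_def le_r_def by (metis mult.assoc)

lemma max_iff:
  fixes E :: "'a::monoid_mult set"
  assumes A: "inductive_left_E_monoid E meet dot"
  shows "max_right_pre_reduced E \<longleftrightarrow> (\<forall>f\<in>idems. \<exists>e\<in>E. sim_r e f)"
proof
  assume "max_right_pre_reduced E"
  then show "\<forall>f\<in>idems. \<exists>e\<in>E. sim_r e f"
    unfolding max_right_pre_reduced_def by (meson sim_sym)
next
  assume h: "\<forall>f\<in>idems. \<exists>e\<in>E. sim_r e f"
  have "\<forall>e\<in>idems. \<exists>!f. f \<in> E \<and> sim_r e f"
  proof
    fix e :: 'a assume "e \<in> idems"
    then obtain f where f: "f \<in> E" "sim_r f e" using h by blast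
    show "\<exists>!f. f \<in> E \<and> sim_r e f"
    proof (rule ex1I[of _ f])
      show "f \<in> E \<and> sim_r e f" using f sim_sym by blast
    next
      fix g assume g: "g \<in> E \<and> sim_r e g"
      then have "sim_r g f" using f sim_sym sim_trans by blast
      then show "g = f" using ilm_rpr[OF A] g f unfolding sim_r_def le_r_def by blast
    qed
  qed
  then show "max_right_pre_reduced E" using ilm_E[OF A] by (simp add: max_right_pre_reduced_def)
qed

lemma zero_lr:
  assumes A: "inductive_left_E_monoid E meet dot" and Z: "integral_with_zero z" and zE: "z \<in> E"
  shows "lr_zero (rest_carrier0 E z) (rest_mult meet dot) rest_D (z, z)"
proof -
  have Z': "is_zero_of z \<and> (\<forall>s t. s * t = z \<longrightarrow> s = z \<or> t = z)" using Z unfolding integral_with_zero_def .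
  have zl: "\<And>x. z * x = z" and zr: "\<And>x. x * z = z" using Z' unfolding is_zero_of_def by blast+
  have integ: "\<And>s t. s * t = z \<Longrightarrow> s = z \<or> t = z" using Z' by blast
  have 1: "1 \<in> E" using ilm_E[OF A] by simp
  have dz: "\<And>f. f \<in> E \<Longrightarrow> dot z f = 1" using dot_1_iff[OF A] zl by blast
  have meetz1: "meet z 1 = z" using meet_1_right[OF A zE] .
  have meetfz: "\<And>f. f \<in> E \<Longrightarrow> meet f z = z"
  proof -
    fix f assume f: "f \<in> E"
    have "le_r (meet f z) z" using ilm_meet[OF A f zE] by simp
    then show "meet f z = z" unfolding le_r_def using zr by metis
  qed
  have dtz: "\<And>t. t \<noteq> z \<Longrightarrow> dot t z = z"
  proof -
    fix t assume t: "t \<noteq> z"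
    have x: "dot t z \<in> E" and ax: "\<And>s. s * t * z = s * t \<longleftrightarrow> s * dot t z = s" using ilm_dot[OF A zE] by auto
    have "dot t z * dot t z = dot t z" using idem_of_E[OF A x] .
    then have "dot t z * t * z = dot t z * t" using ax by blast
    then have "z = dot t z * t" by (simp add: zr mult.assoc)
    then show "dot t z = z" using integ t by metis
  qed
  show ?thesis
    unfolding lr_zero_def
  proof (intro conjI ballI)
    show "(z, z) \<in> rest_carrier0 E z" using zE by (simp add: rest_carrier0_def rest_carrier_def zl)
    show "rest_D (z, z) = (z, z)" by (simp add: rest_D_def)
  next
    fix x assume x: "x \<in> rest_carrier0 E z"
    obtain f t where ft: "x = (f, t)" by (cases x)
    have fE: "f \<in> E" and tz: "t = z \<Longrightarrow> f = z" using x ft by (auto simp: rest_carrier0_def rest_carrier_def)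
    show "rest_mult meet dot (z, z) x = (z, z)"
      using ft by (simp add: rest_mult_def Let_def dz fE meetz1 zl)
    show "rest_mult meet dot x (z, z) = (z, z)"
    proof (cases "t = z")
      case True
      then show ?thesis using ft tz by (simp add: rest_mult_def Let_def dz zE meetz1 zl zr)
    next
      case False
      then show ?thesis using ft by (simp add: rest_mult_def Let_def dtz meetfz fE zr)
    qed
  qed
qed

theorem proposition4p4:
  fixes E :: "'a::monoid_mult set"
    and meet dot :: "'a \<Rightarrow> 'a \<Rightarrow> 'a"
  assumes "inductive_left_E_monoid E meet dot"
  shows "(max_right_pre_reduced E \<longleftrightarrow>
           precisely_enough_large_idems (rest_carrier E) (rest_mult meet dot) rest_D (1, 1)) \<and>
         (\<forall>z. integral_with_zero z \<and> z \<in> E \<longrightarrow>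
           (max_right_pre_reduced E \<longleftrightarrow>
            precisely_enough_large_idems (rest_carrier0 E z) (rest_mult meet dot) rest_D (1, 1)))"
proof -
  note A = assms
  have enough: "enough_large_idems (rest_carrier E) (rest_mult meet dot) rest_D (1, 1)"
    unfolding enough_large_idems_def
  proof (intro ballI impI)
    fix p assume "p \<in> rest_D ` rest_carrier E"
    then obtain e where e: "p = (e, e)" "e \<in> E" using D_img[OF A] by blast
    have "(1, e) \<in> large_idems (rest_carrier E) (rest_mult meet dot) rest_D (1, 1)"
      using LI[OF A] e ilm_E[OF A] by blast
    moreover have "sim_r_in (rest_mult meet dot) (e, e) (1, e)"
      using sim_char[OF A e(2)] idem_of_E[OF A e(2)] by (simp add: sim_r_def le_r_def)
    ultimately show "\<exists>f\<in>large_idems (rest_carrier E) (rest_mult meet dot) rest_D (1, 1).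
           sim_r_in (rest_mult meet dot) p f" using e by blast
  qed
  have P1: "max_right_pre_reduced E \<longleftrightarrow>
           precisely_enough_large_idems (rest_carrier E) (rest_mult meet dot) rest_D (1, 1)"
    unfolding precisely_enough_large_idems_def max_iff[OF A] D_img[OF A] LI[OF A]
    using enough sim_char[OF A] by blast
  have P2: "max_right_pre_reduced E \<longleftrightarrow>
            precisely_enough_large_idems (rest_carrier0 E z) (rest_mult meet dot) rest_D (1, 1)"
    if Z: "integral_with_zero z" and zE: "z \<in> E" for z
  proof -
    have enough0: "enough_large_idems (rest_carrier0 E z) (rest_mult meet dot) rest_D (1, 1)"
      unfolding enough_large_idems_def
    proof (intro ballI impI)
      fix p assume p: "p \<in> rest_D ` rest_carrier0 E z"
        and nz: "\<not> lr_zero (rest_carrier0 E z) (rest_mult meet dot) rest_D p"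
      then obtain e where e: "p = (e, e)" "e \<in> E" using D_img0[OF A] by blast
      have "e \<noteq> z" using nz e zero_lr[OF A Z zE] by blast
      then have "(1, e) \<in> large_idems (rest_carrier0 E z) (rest_mult meet dot) rest_D (1, 1)"
        using LI0[OF A] e ilm_E[OF A] by blast
      moreover have "sim_r_in (rest_mult meet dot) (e, e) (1, e)"
        using sim_char[OF A e(2)] idem_of_E[OF A e(2)] by (simp add: sim_r_def le_r_def)
      ultimately show "\<exists>f\<in>large_idems (rest_carrier0 E z) (rest_mult meet dot) rest_D (1, 1).
             sim_r_in (rest_mult meet dot) p f" using e by blast
    qed
    have zz: "sim_r z z" using idem_of_E[OF A zE] by (simp add: sim_r_def le_r_def)
    have "(\<forall>f\<in>idems. \<exists>e\<in>E. sim_r e f) \<longleftrightarrow>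
          (\<forall>f\<in>{(1, f) | f. f \<in> idems \<and> (f = z \<longrightarrow> 1 = z)}. \<exists>q\<in>{(e, e) | e. e \<in> E}.
              sim_r_in (rest_mult meet dot) q f)"
      using sim_char[OF A] zz zE by blast
    then show ?thesis
      unfolding precisely_enough_large_idems_def max_iff[OF A] D_img0[OF A] LI0[OF A]
      using enough0 by blast
  qed
  show ?thesis using P1 P2 by blast
qed


end
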